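(* If two proper metric spaces $(X,d_X)$ and $(Y,d_Y)$ are coarsely equivalent, then their coarse Freudenthal coronas $CF(X)\setminus X$ and $CF(Y)\setminus Y$ are homeomorphic.
   Context: A map $f:X\to Y$ between metric spaces is coarse if $f^{-1}(K)$ is bounded for every bounded $K\subset Y$, and large scale continuous if for each $m\ge0$ there is $M>0$ with $d_X(x,y)<m\Rightarrow d_Y(f(x),f(y))<M$. Maps $f,g:X\to Y$ are close if $\sup_x d_Y(f(x),g(x))<\infty$. $X$ and $Y$ are coarsely equivalent if there are coarse, large scale continuous maps $f:X\to Y$, $g:Y\to X$ with $g\circ f$ close to $\mathrm{id}_X$ and $f\circ g$ close to $\mathrm{id}_Y$ (the maps need not be continuous). A glacial scale on $X$ is a sequence $\mathcal S=\{(K_i,n_i)\}_{i\ge1}$, $K_i$ bounded subsets, $n_i$ natural numbers, such that for every bounded $K$ and $r>0$ there is $i$ with $K\subset K_i$, $n_i>r$; an $\mathcal S$-chain is a finite sequence $x_1,\dots,x_n$ with, for each $i\le n-1$, some $m$ such that $x_i,x_{i+1}\notin K_m$ and $d(x_i,x_{i+1})\le n_m$; $f:X\to\mathbb R$ is glacially oscillating if for every $\epsilon>0$ there is a glacial scale $\mathcal S$ with $|f(x_1)-f(x_n)|<\epsilon$ for all $\mathcal S$-chains. The coarse Freudenthal compactification $CF(X)$ of a proper metric space $X$ is the compactification induced by all continuous glacially oscillating functions $X\to[0,1]$ (each such function extends continuously over $CF(X)$, and restrictions to $X$ of continuous functions on $CF(X)$ are glacially oscillating). *)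

theory Defs
  imports "HOL-Analysis.Analysis"
begin

definition proper_metric_space :: "'a set \<Rightarrow> ('a \<Rightarrow> 'a \<Rightarrow> real) \<Rightarrow> bool" where
  "proper_metric_space M d \<longleftrightarrow> Metric_space M d \<and>
     (\<forall>S. S \<subseteq> M \<and> closedin (Metric_space.mtopology M d) S \<and> Metric_space.mbounded M d S
          \<longrightarrow> compactin (Metric_space.mtopology M d) S)"

definition coarse_map :: "'a set \<Rightarrow> ('a \<Rightarrow> 'a \<Rightarrow> real) \<Rightarrow> 'b set \<Rightarrow> ('b \<Rightarrow> 'b \<Rightarrow> real)
    \<Rightarrow> ('a \<Rightarrow> 'b) \<Rightarrow> bool" where
  "coarse_map M d N e f \<longleftrightarrow>
     (\<forall>K. K \<subseteq> N \<and> Metric_space.mbounded N e K \<longrightarrow> Metric_space.mbounded M d {x \<in> M. f x \<in> K})"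

definition large_scale_continuous :: "'a set \<Rightarrow> ('a \<Rightarrow> 'a \<Rightarrow> real) \<Rightarrow> 'b set \<Rightarrow> ('b \<Rightarrow> 'b \<Rightarrow> real)
    \<Rightarrow> ('a \<Rightarrow> 'b) \<Rightarrow> bool" where
  "large_scale_continuous M d N e f \<longleftrightarrow>
     (\<forall>m\<ge>0. \<exists>R>0. \<forall>x\<in>M. \<forall>y\<in>M. d x y < m \<longrightarrow> e (f x) (f y) < R)"

definition close_maps :: "'a set \<Rightarrow> ('b \<Rightarrow> 'b \<Rightarrow> real) \<Rightarrow> ('a \<Rightarrow> 'b) \<Rightarrow> ('a \<Rightarrow> 'b) \<Rightarrow> bool" where
  "close_maps M e f g \<longleftrightarrow> (\<exists>C. \<forall>x\<in>M. e (f x) (g x) \<le> C)"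

definition coarsely_equivalent :: "'a set \<Rightarrow> ('a \<Rightarrow> 'a \<Rightarrow> real) \<Rightarrow> 'b set \<Rightarrow> ('b \<Rightarrow> 'b \<Rightarrow> real) \<Rightarrow> bool" where
  "coarsely_equivalent M d N e \<longleftrightarrow>
     (\<exists>f g. f \<in> M \<rightarrow> N \<and> g \<in> N \<rightarrow> M \<and>
        coarse_map M d N e f \<and> large_scale_continuous M d N e f \<and>
        coarse_map N e M d g \<and> large_scale_continuous N e M d g \<and>
        close_maps M d (g \<circ> f) id \<and> close_maps N e (f \<circ> g) id)"

text \<open>Glacial scale: the sequence (K i, n i), indexed from 0 instead of 1.\<close>
definition glacial_scale :: "'a set \<Rightarrow> ('a \<Rightarrow> 'a \<Rightarrow> real) \<Rightarrow> (nat \<Rightarrow> 'a set) \<Rightarrow> (nat \<Rightarrow> nat) \<Rightarrow> bool" where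
  "glacial_scale M d K n \<longleftrightarrow>
     (\<forall>i. K i \<subseteq> M \<and> Metric_space.mbounded M d (K i)) \<and>
     (\<forall>B r. B \<subseteq> M \<and> Metric_space.mbounded M d B \<and> r > 0 \<longrightarrow>
        (\<exists>i. B \<subseteq> K i \<and> real (n i) > r))"

definition glacial_chain :: "'a set \<Rightarrow> ('a \<Rightarrow> 'a \<Rightarrow> real) \<Rightarrow> (nat \<Rightarrow> 'a set) \<Rightarrow> (nat \<Rightarrow> nat)
    \<Rightarrow> 'a list \<Rightarrow> bool" where
  "glacial_chain M d K n xs \<longleftrightarrow> xs \<noteq> [] \<and> set xs \<subseteq> M \<and>
     (\<forall>i. i + 1 < length xs \<longrightarrow>
        (\<exists>m. xs ! i \<notin> K m \<and> xs ! (i + 1) \<notin> K m \<and> d (xs ! i) (xs ! (i + 1)) \<le> real (n m)))"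

definition glacially_oscillating :: "'a set \<Rightarrow> ('a \<Rightarrow> 'a \<Rightarrow> real) \<Rightarrow> ('a \<Rightarrow> real) \<Rightarrow> bool" where
  "glacially_oscillating M d f \<longleftrightarrow>
     (\<forall>\<epsilon>>0. \<exists>K n. glacial_scale M d K n \<and>
        (\<forall>xs. glacial_chain M d K n xs \<longrightarrow> \<bar>f (hd xs) - f (last xs)\<bar> < \<epsilon>))"

text \<open>The family of continuous glacially oscillating functions M \<rightarrow> [0,1]
  (taken extensional, i.e. undefined outside M, to avoid duplicates).\<close>
definition CF_functions :: "'a set \<Rightarrow> ('a \<Rightarrow> 'a \<Rightarrow> real) \<Rightarrow> ('a \<Rightarrow> real) set" where
  "CF_functions M d = {f. f \<in> extensional M \<and>
      continuous_map (Metric_space.mtopology M d) (top_of_set {0..1}) f \<and>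
      glacially_oscillating M d f}"

definition CF_cube :: "'a set \<Rightarrow> ('a \<Rightarrow> 'a \<Rightarrow> real) \<Rightarrow> (('a \<Rightarrow> real) \<Rightarrow> real) topology" where
  "CF_cube M d = product_topology (\<lambda>_. top_of_set {0..1}) (CF_functions M d)"

definition CF_eval :: "'a set \<Rightarrow> ('a \<Rightarrow> 'a \<Rightarrow> real) \<Rightarrow> 'a \<Rightarrow> (('a \<Rightarrow> real) \<Rightarrow> real)" where
  "CF_eval M d x = (\<lambda>f\<in>CF_functions M d. f x)"

definition CF_compactification :: "'a set \<Rightarrow> ('a \<Rightarrow> 'a \<Rightarrow> real) \<Rightarrow> (('a \<Rightarrow> real) \<Rightarrow> real) set" where
  "CF_compactification M d = (CF_cube M d) closure_of (CF_eval M d ` M)"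

definition CF_corona :: "'a set \<Rightarrow> ('a \<Rightarrow> 'a \<Rightarrow> real) \<Rightarrow> (('a \<Rightarrow> real) \<Rightarrow> real) topology" where
  "CF_corona M d = subtopology (CF_cube M d) (CF_compactification M d - CF_eval M d ` M)"

end

theory Submission
  imports Defs
begin


definition vanish :: "'a set \<Rightarrow> ('a \<Rightarrow> 'a \<Rightarrow> real) \<Rightarrow> 'a \<Rightarrow> ('a \<Rightarrow> real) \<Rightarrow> bool" where
  "vanish M d x0 u \<longleftrightarrow> (\<forall>\<epsilon>>0. \<exists>r. \<forall>x\<in>M. r < d x0 x \<longrightarrow> \<bar>u x\<bar> < \<epsilon>)"

context Metric_space begin

lemma mbounded_centered:
  assumes "mbounded B" "x0 \<in> M" shows "\<exists>R. B \<subseteq> mcball x0 R"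
proof -
  obtain x r where "B \<subseteq> mcball x r" using assms mbounded_def by blast
  then show ?thesis
  proof (cases "x \<in> M")
    case True
    have "mcball x r \<subseteq> mcball x0 (d x x0 + r)" by (rule mcball_subset) (auto simp: assms)
    then show ?thesis using \<open>B \<subseteq> mcball x r\<close> by blast
  next
    case False
    then have "B = {}" using \<open>B \<subseteq> mcball x r\<close> by auto
    then show ?thesis by auto
  qed
qed

lemma gscale_exists: "\<exists>K n. glacial_scale M d K n"
proof (cases "M = {}")
  case True
  have "glacial_scale M d (\<lambda>i. {}) (\<lambda>i. i)"
    unfolding glacial_scale_def
  proof (intro conjI allI impI)
    fix B and r :: real assume "B \<subseteq> M \<and> mbounded B \<and> 0 < r"
    moreover have "r < real (nat \<lceil>r\<rceil> + 1)" using real_nat_ceiling_ge[of r] by simp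
    ultimately show "\<exists>i. B \<subseteq> {} \<and> r < real i" using True by blast
  qed auto
  then show ?thesis by blast
next
  case False
  then obtain x0 where x0: "x0 \<in> M" by auto
  have "glacial_scale M d (\<lambda>i. mcball x0 (real i)) (\<lambda>i. i)"
    unfolding glacial_scale_def
  proof (intro conjI allI impI)
    fix B and r :: real assume a: "B \<subseteq> M \<and> mbounded B \<and> 0 < r"
    then obtain R where R: "B \<subseteq> mcball x0 R" using mbounded_centered x0 by blast
    define i where "i = nat \<lceil>max R r\<rceil> + 1"
    have "max R r \<le> real (nat \<lceil>max R r\<rceil>)" by (rule real_nat_ceiling_ge)
    then have "R \<le> real i" "r < real i" unfolding i_def by auto
    then show "\<exists>i. B \<subseteq> mcball x0 (real i) \<and> r < real i"
      using R mcball_subset_concentric[of R "real i" x0] by blast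
  next
    fix i show "mcball x0 (real i) \<subseteq> M" by (rule mcball_subset_mspace)
    show "mbounded (mcball x0 (real i))" by (rule mbounded_mcball)
  qed
  then show ?thesis by blast
qed

lemma chain_hd_last:
  assumes "glacial_chain M d K n xs" "2 \<le> length xs"
  shows "(\<exists>m. hd xs \<notin> K m) \<and> (\<exists>m. last xs \<notin> K m)"
proof -
  have ne: "xs \<noteq> []" using assms by auto
  have st: "\<And>i. i + 1 < length xs \<Longrightarrow> (\<exists>m. xs ! i \<notin> K m \<and> xs ! (i + 1) \<notin> K m)"
    using assms(1) unfolding glacial_chain_def by blast
  have "hd xs = xs ! 0" using ne by (simp add: hd_conv_nth)
  moreover have e: "length xs - 1 = (length xs - 2) + 1" using assms(2) by arith
  have "last xs = xs ! ((length xs - 2) + 1)" using last_conv_nth[OF ne] e by simp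
  moreover have "\<exists>m. xs ! 0 \<notin> K m" using st[of 0] assms(2) by auto
  moreover have "(length xs - 2) + 1 < length xs" using assms(2) by arith
  then have "\<exists>m. xs ! ((length xs - 2) + 1) \<notin> K m" using st by blast
  ultimately show ?thesis by simp
qed

lemma chain_short: "glacial_chain M d K n xs \<Longrightarrow> length xs < 2 \<Longrightarrow> hd xs = last xs"
  unfolding glacial_chain_def by (cases xs) auto

lemma perturb:
  assumes x0: "x0 \<in> M" and u: "glacially_oscillating M d u" and v: "vanish M d x0 (\<lambda>x. v x - u x)"
  shows "glacially_oscillating M d v"
  unfolding glacially_oscillating_def
proof (intro allI impI)
  fix \<epsilon> :: real assume "\<epsilon> > 0"
  then obtain K n where sc: "glacial_scale M d K n" and ch: "\<And>xs. glacial_chain M d K n xs \<Longrightarrow> \<bar>u (hd xs) - u (last xs)\<bar> < \<epsilon>/3"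
    using u unfolding glacially_oscillating_def by (meson divide_pos_pos zero_less_numeral)
  obtain r where r: "\<And>x. x \<in> M \<Longrightarrow> r < d x0 x \<Longrightarrow> \<bar>v x - u x\<bar> < \<epsilon>/3"
    using v \<open>\<epsilon>>0\<close> unfolding vanish_def by (meson divide_pos_pos zero_less_numeral)
  define K' where "K' = (\<lambda>i. K i \<union> mcball x0 r)"
  have sc': "glacial_scale M d K' n"
    using sc unfolding glacial_scale_def K'_def
    by (simp add: mbounded_Un mbounded_mcball mcball_subset_mspace) (meson le_supI1)
  have "\<bar>v (hd xs) - v (last xs)\<bar> < \<epsilon>" if c: "glacial_chain M d K' n xs" for xs
  proof -
    have c0: "glacial_chain M d K n xs" using c unfolding glacial_chain_def K'_def by blast
    show ?thesis
    proof (cases "length xs < 2")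
      case True
      then show ?thesis using chain_short[OF c] \<open>\<epsilon>>0\<close> by simp
    next
      case False
      then obtain m1 m2 where "hd xs \<notin> K' m1" "last xs \<notin> K' m2" using chain_hd_last[OF c] by auto
      moreover have "hd xs \<in> M" "last xs \<in> M" using c unfolding glacial_chain_def by auto
      ultimately have "r < d x0 (hd xs)" "r < d x0 (last xs)" using x0 unfolding K'_def by auto
      then have "\<bar>v (hd xs) - u (hd xs)\<bar> < \<epsilon>/3" "\<bar>v (last xs) - u (last xs)\<bar> < \<epsilon>/3"
        using r \<open>hd xs \<in> M\<close> \<open>last xs \<in> M\<close> by auto
      with ch[OF c0] show ?thesis by linarith
    qed
  qed
  then show "\<exists>K n. glacial_scale M d K n \<and> (\<forall>xs. glacial_chain M d K n xs \<longrightarrow> \<bar>v (hd xs) - v (last xs)\<bar> < \<epsilon>)"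
    using sc' by blast
qed

lemma zero_go: "glacially_oscillating M d (\<lambda>x. 0)"
  unfolding glacially_oscillating_def using gscale_exists by auto

lemma vanish_go: "x0 \<in> M \<Longrightarrow> vanish M d x0 v \<Longrightarrow> glacially_oscillating M d v"
  by (rule perturb[OF _ zero_go]) auto

end

lemma vanish_trans:
  assumes "vanish M d x0 (\<lambda>x. a x - b x)" "vanish M d x0 (\<lambda>x. b x - c x)"
  shows "vanish M d x0 (\<lambda>x. a x - c x)"
  unfolding vanish_def
proof (intro allI impI)
  fix \<epsilon>::real assume "\<epsilon>>0"
  then obtain r1 r2 where r: "\<And>x. x\<in>M \<Longrightarrow> r1 < d x0 x \<Longrightarrow> \<bar>a x - b x\<bar> < \<epsilon>/2"
     "\<And>x. x\<in>M \<Longrightarrow> r2 < d x0 x \<Longrightarrow> \<bar>b x - c x\<bar> < \<epsilon>/2"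
    using assms unfolding vanish_def by (meson half_gt_zero)
  then show "\<exists>r. \<forall>x\<in>M. r < d x0 x \<longrightarrow> \<bar>a x - c x\<bar> < \<epsilon>"
  proof (intro exI[of _ "max r1 r2"] ballI impI)
    fix x assume "x \<in> M" "max r1 r2 < d x0 x"
    then have "\<bar>a x - b x\<bar> < \<epsilon>/2" "\<bar>b x - c x\<bar> < \<epsilon>/2" using r by auto
    then show "\<bar>a x - c x\<bar> < \<epsilon>" by linarith
  qed
qed

lemma vanish_sym: "vanish M d x0 (\<lambda>x. a x - b x) \<Longrightarrow> vanish M d x0 (\<lambda>x. b x - a x)"
  unfolding vanish_def by (simp add: abs_minus_commute)



definition approx :: "'a set \<Rightarrow> ('a \<Rightarrow> 'a \<Rightarrow> real) \<Rightarrow> ('a \<Rightarrow> real) \<Rightarrow> 'a \<Rightarrow> real" where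
  "approx M d u = (\<lambda>x\<in>M. Inf ((\<lambda>y. u y + d x y) ` M))"

context Metric_space begin

lemma lip01_cont:
  assumes h01: "\<And>x. x\<in>M \<Longrightarrow> h x \<in> {0..1}" and lip: "\<And>x y. x\<in>M \<Longrightarrow> y\<in>M \<Longrightarrow> h x \<le> h y + d x y"
  shows "continuous_map mtopology (top_of_set {0..1}) h"
proof -
  have "continuous_map mtopology euclidean h"
    unfolding Met_TC.continuous_map_to_metric[simplified]
  proof (intro ballI allI impI)
    fix x and \<epsilon>::real assume x: "x \<in> topspace mtopology" and e: "\<epsilon> > 0"
    have "\<forall>y\<in>mball x \<epsilon>. dist (h x) (h y) < \<epsilon>"
    proof
      fix y assume y: "y \<in> mball x \<epsilon>"
      then have "x \<in> M" "y \<in> M" "d x y < \<epsilon>" by auto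
      then have "h x \<le> h y + d x y" "h y \<le> h x + d y x" using lip by auto
      then have "h x \<le> h y + d x y" "h y \<le> h x + d x y" using commute[of x y] by auto
      then show "dist (h x) (h y) < \<epsilon>" using \<open>d x y < \<epsilon>\<close> by (simp add: dist_real_def)
    qed
    moreover have "x \<in> mball x \<epsilon>" using x e by auto
    ultimately show "\<exists>U. openin mtopology U \<and> x \<in> U \<and> (\<forall>y\<in>U. dist (h x) (h y) < \<epsilon>)"
      using openin_mball by blast
  qed
  then show ?thesis using h01 by (auto simp: continuous_map_in_subtopology)
qed

context
  fixes u :: "'a \<Rightarrow> real"
  assumes u01: "\<And>x. x\<in>M \<Longrightarrow> 0 \<le> u x \<and> u x \<le> 1"
begin

lemma approx_facts:
  assumes x: "x \<in> M"
  shows "0 \<le> approx M d u x" "approx M d u x \<le> u x"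
    and "\<And>y. y \<in> M \<Longrightarrow> approx M d u x \<le> u y + d x y"
    and "\<And>a. approx M d u x < a \<Longrightarrow> \<exists>y\<in>M. u y + d x y < a"
proof -
  have ne: "(\<lambda>y. u y + d x y) ` M \<noteq> {}" using x by auto
  have bdd: "bdd_below ((\<lambda>y. u y + d x y) ` M)"
    by (rule bdd_belowI[of _ 0]) (use u01 in force)
  have eq: "approx M d u x = Inf ((\<lambda>y. u y + d x y) ` M)" using x by (simp add: approx_def)
  show "0 \<le> approx M d u x" unfolding eq
    by (rule cInf_greatest[OF ne]) (use u01 in force)
  show low: "\<And>y. y \<in> M \<Longrightarrow> approx M d u x \<le> u y + d x y" unfolding eq
    by (rule cInf_lower[OF _ bdd]) auto
  show "approx M d u x \<le> u x" using low[OF x] x by simp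
  show "\<And>a. approx M d u x < a \<Longrightarrow> \<exists>y\<in>M. u y + d x y < a"
    unfolding eq using cInf_less_iff[OF ne bdd] by auto
qed

lemma approx_lip:
  assumes x: "x \<in> M" and x': "x' \<in> M"
  shows "approx M d u x \<le> approx M d u x' + d x x'"
proof -
  have ne: "(\<lambda>y. u y + d x' y) ` M \<noteq> {}" using x' by auto
  have "approx M d u x - d x x' \<le> Inf ((\<lambda>y. u y + d x' y) ` M)"
  proof (rule cInf_greatest[OF ne])
    fix z assume "z \<in> (\<lambda>y. u y + d x' y) ` M"
    then obtain y where y: "y \<in> M" "z = u y + d x' y" by auto
    have "approx M d u x \<le> u y + d x y" using approx_facts(3)[OF x y(1)] .
    also have "\<dots> \<le> u y + d x x' + d x' y" using triangle[OF x x' y(1)] by simp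
    finally show "approx M d u x - d x x' \<le> z" using y by simp
  qed
  then show ?thesis using x' by (simp add: approx_def)
qed

lemma approx_cont: "continuous_map mtopology (top_of_set {0..1}) (approx M d u)"
proof (rule lip01_cont)
  fix x assume "x \<in> M"
  then show "approx M d u x \<in> {0..1}" using approx_facts[of x] u01[of x] by auto
qed (rule approx_lip)

lemma approx_vanish:
  assumes x0: "x0 \<in> M" and go: "glacially_oscillating M d u"
  shows "vanish M d x0 (\<lambda>x. approx M d u x - u x)"
  unfolding vanish_def
proof (intro allI impI)
  fix \<epsilon> :: real assume "\<epsilon> > 0"
  then obtain K n where sc: "glacial_scale M d K n" and ch: "\<And>xs. glacial_chain M d K n xs \<Longrightarrow> \<bar>u (hd xs) - u (last xs)\<bar> < \<epsilon>/2"
    using go unfolding glacially_oscillating_def by (meson half_gt_zero)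
  obtain m0 where m0: "1 < real (n m0)"
    using sc unfolding glacial_scale_def by (metis empty_subsetI mbounded_empty zero_less_one)
  have "mbounded (K m0)" using sc unfolding glacial_scale_def by blast
  then obtain r0 where r0: "K m0 \<subseteq> mcball x0 r0" using mbounded_centered x0 by blast
  show "\<exists>r. \<forall>x\<in>M. r < d x0 x \<longrightarrow> \<bar>approx M d u x - u x\<bar> < \<epsilon>"
  proof (intro exI[of _ "r0 + 1"] ballI impI)
    fix x assume x: "x \<in> M" and far: "r0 + 1 < d x0 x"
    show "\<bar>approx M d u x - u x\<bar> < \<epsilon>"
    proof (rule ccontr)
      assume "\<not> ?thesis"
      then have "approx M d u x < u x - \<epsilon>/2" using approx_facts(2)[OF x] \<open>\<epsilon>>0\<close> by linarith
      then obtain y where y: "y \<in> M" "u y + d x y < u x - \<epsilon>/2" using approx_facts(4)[OF x] by blast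
      then have dxy: "d x y < 1" using u01[OF x] u01[OF y(1)] \<open>\<epsilon>>0\<close> by linarith
      have "d x0 x \<le> d x0 y + d y x" using triangle[OF x0 y(1) x] .
      then have "r0 < d x0 y" using far dxy commute[of x y] by linarith
      then have yK: "y \<notin> K m0" using r0 by auto
      have xK: "x \<notin> K m0" using r0 far by auto
      have "glacial_chain M d K n [x, y]"
        unfolding glacial_chain_def using x y(1) xK yK dxy m0 by (auto simp: less_Suc_eq)
      from ch[OF this] have "\<bar>u x - u y\<bar> < \<epsilon>/2" by simp
      then show False using y(2) nonneg[of x y] by linarith
    qed
  qed
qed

lemma approx_CF:
  assumes x0: "x0 \<in> M" and go: "glacially_oscillating M d u"
  shows "approx M d u \<in> CF_functions M d"
proof -
  have "approx M d u \<in> extensional M" by (simp add: approx_def)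
  then show ?thesis unfolding CF_functions_def
    using approx_cont perturb[OF x0 go approx_vanish[OF x0 go]] by blast
qed

end

definition bump :: "'a \<Rightarrow> 'a \<Rightarrow> real" where
  "bump x1 = (\<lambda>y\<in>M. max 0 (1 - d x1 y))"

lemma bump_CF:
  assumes x1: "x1 \<in> M"
  shows "bump x1 \<in> CF_functions M d" "bump x1 x1 = 1"
    "\<And>y. y \<in> M \<Longrightarrow> d x1 y > 1 \<Longrightarrow> bump x1 y = 0"
proof -
  show "bump x1 x1 = 1" using x1 by (simp add: bump_def)
  show z: "\<And>y. y \<in> M \<Longrightarrow> d x1 y > 1 \<Longrightarrow> bump x1 y = 0" by (simp add: bump_def)
  have cont: "continuous_map mtopology (top_of_set {0..1}) (bump x1)"
  proof (rule lip01_cont)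
    fix x assume "x \<in> M" then show "bump x1 x \<in> {0..1}" by (simp add: bump_def)
  next
    fix x y assume x: "x \<in> M" and y: "y \<in> M"
    have "d x1 y \<le> d x1 x + d x y" using triangle[OF x1 x y] .
    then show "bump x1 x \<le> bump x1 y + d x y" using x y by (simp add: bump_def)
  qed
  have "vanish M d x1 (bump x1)"
    unfolding vanish_def
  proof (intro allI impI exI[of _ 1] ballI)
    fix \<epsilon>::real and y assume "\<epsilon>>0" "y \<in> M" "1 < d x1 y"
    then show "\<bar>bump x1 y\<bar> < \<epsilon>" using z by simp
  qed
  then have "glacially_oscillating M d (bump x1)" by (rule vanish_go[OF x1])
  then show "bump x1 \<in> CF_functions M d" using cont unfolding CF_functions_def by (auto simp: bump_def)
qed

lemma close_vanish:
  assumes x0: "x0 \<in> M" and go: "glacially_oscillating M d \<phi>"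
    and k: "\<And>x. x \<in> M \<Longrightarrow> k x \<in> M" and C: "\<And>x. x \<in> M \<Longrightarrow> d (k x) x \<le> C"
  shows "vanish M d x0 (\<lambda>x. \<phi> (k x) - \<phi> x)"
  unfolding vanish_def
proof (intro allI impI)
  fix \<epsilon> :: real assume "\<epsilon> > 0"
  then obtain K n where sc: "glacial_scale M d K n" and ch: "\<And>xs. glacial_chain M d K n xs \<Longrightarrow> \<bar>\<phi> (hd xs) - \<phi> (last xs)\<bar> < \<epsilon>"
    using go unfolding glacially_oscillating_def by blast
  obtain m0 where m0: "max C 1 < real (n m0)"
    using sc unfolding glacial_scale_def by (metis empty_subsetI mbounded_empty max.strict_coboundedI2 zero_less_one)
  have "mbounded (K m0)" using sc unfolding glacial_scale_def by blast
  then obtain r0 where r0: "K m0 \<subseteq> mcball x0 r0" using mbounded_centered x0 by blast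
  show "\<exists>r. \<forall>x\<in>M. r < d x0 x \<longrightarrow> \<bar>\<phi> (k x) - \<phi> x\<bar> < \<epsilon>"
  proof (intro exI[of _ "r0 + max C 1"] ballI impI)
    fix x assume x: "x \<in> M" and far: "r0 + max C 1 < d x0 x"
    have kx: "k x \<in> M" using k x .
    have "d x0 x \<le> d x0 (k x) + d (k x) x" using triangle[OF x0 kx x] .
    then have "r0 < d x0 (k x)" using far C[OF x] by linarith
    then have yK: "k x \<notin> K m0" using r0 by auto
    have "r0 < d x0 x" using far by linarith
    then have xK: "x \<notin> K m0" using r0 by auto
    have "d (k x) x \<le> real (n m0)" using C[OF x] m0 by linarith
    then have "glacial_chain M d K n [k x, x]"
      unfolding glacial_chain_def using x kx xK yK by (auto simp: less_Suc_eq)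
    from ch[OF this] show "\<bar>\<phi> (k x) - \<phi> x\<bar> < \<epsilon>" by simp
  qed
qed

end



abbreviation "cubeT I \<equiv> product_topology (\<lambda>_. top_of_set {0..1::real}) I"

lemma cube_closure:
  assumes S: "S \<subseteq> topspace (cubeT I)"
  shows "q \<in> (cubeT I) closure_of S \<longleftrightarrow> q \<in> topspace (cubeT I) \<and>
    (\<forall>J \<epsilon>. finite J \<and> J \<subseteq> I \<and> \<epsilon> > 0 \<longrightarrow> (\<exists>s\<in>S. \<forall>i\<in>J. \<bar>s i - q i\<bar> < \<epsilon>))"
proof
  assume q: "q \<in> (cubeT I) closure_of S"
  then have qt: "q \<in> topspace (cubeT I)" by (simp add: in_closure_of)
  show "q \<in> topspace (cubeT I) \<and> (\<forall>J \<epsilon>. finite J \<and> J \<subseteq> I \<and> \<epsilon> > 0 \<longrightarrow> (\<exists>s\<in>S. \<forall>i\<in>J. \<bar>s i - q i\<bar> < \<epsilon>))"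
  proof (intro conjI allI impI qt)
    fix J and \<epsilon>::real assume a: "finite J \<and> J \<subseteq> I \<and> \<epsilon> > 0"
    define U where "U i = {z \<in> topspace (cubeT I). z i \<in> {0..1} \<inter> ball (q i) \<epsilon>}" for i
    have "openin (cubeT I) (U i)" if "i \<in> J" for i
      unfolding U_def
      by (rule openin_continuous_map_preimage[OF continuous_map_product_projection]) (use a that in auto)
    then have op: "openin (cubeT I) ((\<Inter>i\<in>J. U i) \<inter> topspace (cubeT I))"
      using a by (intro openin_INT) auto
    have "q \<in> (\<Inter>i\<in>J. U i) \<inter> topspace (cubeT I)"
      using qt a unfolding U_def by (auto simp: PiE_iff)
    then obtain s where "s \<in> S" "s \<in> (\<Inter>i\<in>J. U i)"
      using q op unfolding in_closure_of by blast
    moreover from this(2) have "\<forall>i\<in>J. \<bar>q i - s i\<bar> < \<epsilon>" unfolding U_def by (auto simp: dist_real_def)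
    ultimately show "\<exists>s\<in>S. \<forall>i\<in>J. \<bar>s i - q i\<bar> < \<epsilon>"
      by (metis abs_minus_commute)
  qed
next
  assume R: "q \<in> topspace (cubeT I) \<and>
    (\<forall>J \<epsilon>. finite J \<and> J \<subseteq> I \<and> \<epsilon> > 0 \<longrightarrow> (\<exists>s\<in>S. \<forall>i\<in>J. \<bar>s i - q i\<bar> < \<epsilon>))"
  show "q \<in> (cubeT I) closure_of S"
    unfolding in_closure_of
  proof (intro conjI allI impI)
    show "q \<in> topspace (cubeT I)" using R by blast
    fix T assume T: "q \<in> T \<and> openin (cubeT I) T"
    then obtain U where U: "finite {i \<in> I. U i \<noteq> {0..1}}" "\<forall>i\<in>I. openin (top_of_set {0..1}) (U i)"
        "q \<in> Pi\<^sub>E I U" "Pi\<^sub>E I U \<subseteq> T"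
      unfolding openin_product_topology_alt by auto
    define J where "J = {i \<in> I. U i \<noteq> {0..1}}"
    have "\<forall>i\<in>J. \<exists>e>0. \<forall>y\<in>{0..1}. dist y (q i) < e \<longrightarrow> y \<in> U i"
      using U(2,3) unfolding J_def openin_euclidean_subtopology_iff by (auto simp: PiE_iff)
    then obtain eps where eps: "\<forall>i\<in>J. eps i > 0 \<and> (\<forall>y\<in>{0..1}. dist y (q i) < eps i \<longrightarrow> y \<in> U i)"
      by metis
    define \<epsilon> where "\<epsilon> = Min (insert 1 (eps ` J))"
    have fJ: "finite J" using U(1) J_def by simp
    have e0: "\<epsilon> > 0" unfolding \<epsilon>_def using fJ eps by (subst Min_gr_iff) auto
    have ele: "\<And>i. i \<in> J \<Longrightarrow> \<epsilon> \<le> eps i" unfolding \<epsilon>_def using fJ by (intro Min_le) auto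
    obtain s where s: "s \<in> S" "\<forall>i\<in>J. \<bar>s i - q i\<bar> < \<epsilon>"
      using R fJ e0 unfolding J_def by (metis (no_types, lifting) mem_Collect_eq subsetI)
    have st: "s \<in> topspace (cubeT I)" using S s(1) by blast
    have "s \<in> Pi\<^sub>E I U"
    proof -
      have "s i \<in> U i" if "i \<in> I" for i
      proof (cases "i \<in> J")
        case True
        have "s i \<in> {0..1}" using st that by (auto simp: PiE_iff)
        moreover have "dist (s i) (q i) < eps i" using s(2) ele[OF True] True by (auto simp: dist_real_def)
        ultimately show ?thesis using eps True by blast
      next
        case False
        then show ?thesis using st that unfolding J_def by (auto simp: PiE_iff)
      qed
      then show ?thesis using st by (auto simp: PiE_iff)
    qed
    then show "\<exists>y. y \<in> S \<and> y \<in> T" using s(1) U(4) by blast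
  qed
qed

lemma cube_Hausdorff: "Hausdorff_space (cubeT I)"
  by (simp add: Hausdorff_space_product_topology Hausdorff_space_subtopology)

lemma CF_cube_eq: "CF_cube M d = cubeT (CF_functions M d)"
  by (simp add: CF_cube_def)

lemma CF_fun_01: "\<phi> \<in> CF_functions M d \<Longrightarrow> x \<in> M \<Longrightarrow> Metric_space M d \<Longrightarrow> \<phi> x \<in> {0..1}"
  unfolding CF_functions_def using continuous_map_image_subset_topspace
  by (fastforce simp: Metric_space.topspace_mtopology)

lemma CF_fun_go: "\<phi> \<in> CF_functions M d \<Longrightarrow> glacially_oscillating M d \<phi>"
  unfolding CF_functions_def by blast

context Metric_space begin

lemma eval_cont: "continuous_map mtopology (CF_cube M d) (CF_eval M d)"
  unfolding CF_cube_eq continuous_map_componentwise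
proof (intro conjI ballI)
  show "CF_eval M d ` topspace mtopology \<subseteq> extensional (CF_functions M d)"
    by (auto simp: CF_eval_def)
  fix \<phi> assume \<phi>: "\<phi> \<in> CF_functions M d"
  then have "continuous_map mtopology (top_of_set {0..1}) \<phi>" unfolding CF_functions_def by blast
  then show "continuous_map mtopology (top_of_set {0..1}) (\<lambda>x. CF_eval M d x \<phi>)"
    by (rule continuous_map_eq) (use \<phi> in \<open>simp add: CF_eval_def\<close>)
qed

lemma eval_top: "x \<in> M \<Longrightarrow> CF_eval M d x \<in> topspace (CF_cube M d)"
  using continuous_map_image_subset_topspace[OF eval_cont] by auto

definition esc :: "'a \<Rightarrow> (('a \<Rightarrow> real) \<Rightarrow> real) \<Rightarrow> bool" where
  "esc x0 p \<longleftrightarrow> (\<forall>r J \<epsilon>. finite J \<and> J \<subseteq> CF_functions M d \<and> \<epsilon> > 0 \<longrightarrow>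
      (\<exists>x\<in>M. r < d x0 x \<and> (\<forall>\<phi>\<in>J. \<bar>\<phi> x - p \<phi>\<bar> < \<epsilon>)))"

lemma corona_iff:
  assumes pr: "proper_metric_space M d" and x0: "x0 \<in> M"
  shows "p \<in> topspace (CF_corona M d) \<longleftrightarrow> p \<in> topspace (CF_cube M d) \<and> esc x0 p"
proof
  have sub: "CF_eval M d ` M \<subseteq> topspace (CF_cube M d)" using eval_top by auto
  assume "p \<in> topspace (CF_corona M d)"
  then have p: "p \<in> CF_cube M d closure_of (CF_eval M d ` M)" "p \<notin> CF_eval M d ` M"
    unfolding CF_corona_def CF_compactification_def by auto
  then have pt: "p \<in> topspace (CF_cube M d)" by (simp add: in_closure_of)
  have "esc x0 p" unfolding esc_def
  proof (intro allI impI)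
    fix r J \<epsilon> assume a: "finite J \<and> J \<subseteq> CF_functions M d \<and> (\<epsilon>::real) > 0"
    define A where "A = mcball x0 r"
    define B where "B = M - A"
    have cA: "compactin mtopology A"
      using pr unfolding proper_metric_space_def A_def
      by (simp add: mcball_subset_mspace mbounded_mcball)
    have "compactin (CF_cube M d) (CF_eval M d ` A)" by (rule image_compactin[OF cA eval_cont])
    then have clA: "closedin (CF_cube M d) (CF_eval M d ` A)"
      by (rule compactin_imp_closedin[rotated]) (simp add: CF_cube_eq cube_Hausdorff)
    have "CF_eval M d ` M = CF_eval M d ` A \<union> CF_eval M d ` B"
      unfolding A_def B_def using mcball_subset_mspace by auto
    moreover have "p \<notin> CF_cube M d closure_of (CF_eval M d ` A)"
      using closure_of_closedin[OF clA] p(2) unfolding A_def using mcball_subset_mspace by auto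
    ultimately have "p \<in> CF_cube M d closure_of (CF_eval M d ` B)" using p(1) by simp
    moreover have "CF_eval M d ` B \<subseteq> topspace (cubeT (CF_functions M d))"
      using sub unfolding B_def CF_cube_eq by auto
    ultimately have "p \<in> cubeT (CF_functions M d) closure_of (CF_eval M d ` B)" "CF_eval M d ` B \<subseteq> topspace (cubeT (CF_functions M d))"
      by (simp_all add: CF_cube_eq)
    then have "\<forall>J \<epsilon>. finite J \<and> J \<subseteq> CF_functions M d \<and> \<epsilon> > 0 \<longrightarrow> (\<exists>s\<in>CF_eval M d ` B. \<forall>i\<in>J. \<bar>s i - p i\<bar> < \<epsilon>)"
      using cube_closure by blast
    then obtain s where s: "s \<in> CF_eval M d ` B" "\<forall>\<phi>\<in>J. \<bar>s \<phi> - p \<phi>\<bar> < \<epsilon>"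
      using a by blast
    then obtain x where x: "x \<in> B" "s = CF_eval M d x" by auto
    then have "x \<in> M" "r < d x0 x" unfolding B_def A_def using x0 by auto
    moreover have "\<forall>\<phi>\<in>J. \<bar>\<phi> x - p \<phi>\<bar> < \<epsilon>"
    proof
      fix \<phi> assume "\<phi> \<in> J"
      then have "\<phi> \<in> CF_functions M d" using a by blast
      moreover have "\<bar>s \<phi> - p \<phi>\<bar> < \<epsilon>" using s(2) \<open>\<phi> \<in> J\<close> by blast
      ultimately show "\<bar>\<phi> x - p \<phi>\<bar> < \<epsilon>" using x(2) by (simp add: CF_eval_def)
    qed
    ultimately show "\<exists>x\<in>M. r < d x0 x \<and> (\<forall>\<phi>\<in>J. \<bar>\<phi> x - p \<phi>\<bar> < \<epsilon>)" by blast
  qed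
  then show "p \<in> topspace (CF_cube M d) \<and> esc x0 p" using pt by blast
next
  have sub: "CF_eval M d ` M \<subseteq> topspace (cubeT (CF_functions M d))" using eval_top unfolding CF_cube_eq by blast
  assume a: "p \<in> topspace (CF_cube M d) \<and> esc x0 p"
  have "p \<in> CF_cube M d closure_of (CF_eval M d ` M)"
    unfolding CF_cube_eq cube_closure[OF sub]
  proof (intro conjI allI impI)
    show "p \<in> topspace (cubeT (CF_functions M d))" using a by (simp add: CF_cube_eq)
    fix J \<epsilon> assume b: "finite J \<and> J \<subseteq> CF_functions M d \<and> (\<epsilon>::real) > 0"
    then obtain x where x: "x \<in> M" "\<forall>\<phi>\<in>J. \<bar>\<phi> x - p \<phi>\<bar> < \<epsilon>" using a unfolding esc_def by blast
    then show "\<exists>s\<in>CF_eval M d ` M. \<forall>i\<in>J. \<bar>s i - p i\<bar> < \<epsilon>"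
      using b by (intro bexI[of _ "CF_eval M d x"]) (auto simp: CF_eval_def)
  qed
  moreover have "p \<notin> CF_eval M d ` M"
  proof
    assume "p \<in> CF_eval M d ` M"
    then obtain x1 where x1: "x1 \<in> M" "p = CF_eval M d x1" by auto
    have fin: "finite {bump x1} \<and> {bump x1} \<subseteq> CF_functions M d \<and> (1/2::real) > 0"
      using bump_CF(1)[OF x1(1)] by auto
    have "\<exists>x\<in>M. d x0 x1 + 1 < d x0 x \<and> (\<forall>\<phi>\<in>{bump x1}. \<bar>\<phi> x - p \<phi>\<bar> < 1/2)"
      using a fin unfolding esc_def by blast
    then obtain x where x: "x \<in> M" "d x0 x1 + 1 < d x0 x" "\<bar>bump x1 x - p (bump x1)\<bar> < 1/2"
      by blast
    have "d x0 x \<le> d x0 x1 + d x1 x" using triangle[OF x0 x1(1) x(1)] .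
    then have "bump x1 x = 0" using bump_CF(3)[OF x1(1) x(1)] x(2) by linarith
    moreover have "p (bump x1) = 1" using x1 bump_CF[OF x1(1)] by (simp add: CF_eval_def)
    ultimately show False using x(3) by simp
  qed
  ultimately show "p \<in> topspace (CF_corona M d)"
    using a unfolding CF_corona_def CF_compactification_def topspace_subtopology by blast
qed

lemma esc_respect:
  assumes e: "esc x0 p" and \<phi>: "\<phi>1 \<in> CF_functions M d" "\<phi>2 \<in> CF_functions M d"
    and v: "vanish M d x0 (\<lambda>x. \<phi>1 x - \<phi>2 x)"
  shows "p \<phi>1 = p \<phi>2"
proof (rule ccontr)
  assume ne: "p \<phi>1 \<noteq> p \<phi>2"
  define \<delta> where "\<delta> = \<bar>p \<phi>1 - p \<phi>2\<bar>"
  have d0: "\<delta> > 0" using ne unfolding \<delta>_def by simp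
  obtain r where r: "\<And>x. x\<in>M \<Longrightarrow> r < d x0 x \<Longrightarrow> \<bar>\<phi>1 x - \<phi>2 x\<bar> < \<delta>/3"
    using v d0 unfolding vanish_def by (meson divide_pos_pos zero_less_numeral)
  have "finite {\<phi>1, \<phi>2} \<and> {\<phi>1, \<phi>2} \<subseteq> CF_functions M d \<and> \<delta>/3 > 0" using \<phi> d0 by auto
  then have "\<exists>x\<in>M. r < d x0 x \<and> (\<forall>\<phi>\<in>{\<phi>1, \<phi>2}. \<bar>\<phi> x - p \<phi>\<bar> < \<delta>/3)"
    using e unfolding esc_def by blast
  then obtain x where x: "x \<in> M" "r < d x0 x" "\<bar>\<phi>1 x - p \<phi>1\<bar> < \<delta>/3" "\<bar>\<phi>2 x - p \<phi>2\<bar> < \<delta>/3"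
    by blast
  have "\<bar>\<phi>1 x - \<phi>2 x\<bar> < \<delta>/3" using r x by auto
  then have "p \<phi>1 - p \<phi>2 < \<delta>" "p \<phi>2 - p \<phi>1 < \<delta>" using x(3,4) unfolding abs_less_iff by linarith+
  then have "\<bar>p \<phi>1 - p \<phi>2\<bar> < \<delta>" unfolding abs_less_iff by linarith
  then show False unfolding \<delta>_def by simp
qed

end



lemma pullback_go:
  assumes X: "Metric_space M d" and Y: "Metric_space N e" and x0: "x0 \<in> M"
    and fM: "f \<in> M \<rightarrow> N" and fc: "coarse_map M d N e f" and fl: "large_scale_continuous M d N e f"
    and go: "glacially_oscillating N e \<psi>"
  shows "glacially_oscillating M d (\<lambda>x. \<psi> (f x))"
  unfolding glacially_oscillating_def
proof (intro allI impI)
  interpret X: Metric_space M d by fact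
  interpret Y: Metric_space N e by fact
  fix \<epsilon>::real assume "\<epsilon> > 0"
  then obtain K n where sc: "glacial_scale N e K n" and ch: "\<And>xs. glacial_chain N e K n xs \<Longrightarrow> \<bar>\<psi> (hd xs) - \<psi> (last xs)\<bar> < \<epsilon>"
    using go unfolding glacially_oscillating_def by blast
  have "\<forall>k::nat. \<exists>R>0. \<forall>x\<in>M. \<forall>y\<in>M. d x y < real k + 1 \<longrightarrow> e (f x) (f y) < R"
    using fl unfolding large_scale_continuous_def by (metis add_nonneg_nonneg of_nat_0_le_iff zero_le_one)
  then obtain R where R: "\<And>k. R k > 0" "\<And>k x y. x\<in>M \<Longrightarrow> y\<in>M \<Longrightarrow> d x y < real k + 1 \<Longrightarrow> e (f x) (f y) < R k"
    by metis
  have "\<forall>k. \<exists>i. R k < real (n i)"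
  proof
    fix k
    have "{} \<subseteq> N \<and> Y.mbounded {} \<and> R k > 0" using R(1) by auto
    then show "\<exists>i. R k < real (n i)" using sc unfolding glacial_scale_def by blast
  qed
  then obtain ii where ii: "\<And>k. R k < real (n (ii k))" by metis
  define K' where "K' k = {x\<in>M. f x \<in> K (ii k)} \<union> X.mcball x0 (real k)" for k
  have sc': "glacial_scale M d K' (\<lambda>k. k)"
    unfolding glacial_scale_def
  proof (intro conjI allI impI)
    fix k
    show "K' k \<subseteq> M" unfolding K'_def using X.mcball_subset_mspace by auto
    have "K (ii k) \<subseteq> N \<and> Y.mbounded (K (ii k))" using sc unfolding glacial_scale_def by blast
    then have "X.mbounded {x\<in>M. f x \<in> K (ii k)}" using fc unfolding coarse_map_def by blast
    then show "X.mbounded (K' k)" unfolding K'_def by (simp add: X.mbounded_Un X.mbounded_mcball)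
  next
    fix B and r::real assume a: "B \<subseteq> M \<and> X.mbounded B \<and> 0 < r"
    then obtain R0 where R0: "B \<subseteq> X.mcball x0 R0" using X.mbounded_centered x0 by blast
    define j where "j = nat \<lceil>max R0 r\<rceil> + 1"
    have "max R0 r \<le> real (nat \<lceil>max R0 r\<rceil>)" by (rule real_nat_ceiling_ge)
    then have "R0 \<le> real j" "r < real j" unfolding j_def by auto
    then have "B \<subseteq> K' j" using R0 X.mcball_subset_concentric[of R0 "real j" x0] unfolding K'_def by blast
    then show "\<exists>i. B \<subseteq> K' i \<and> r < real i" using \<open>r < real j\<close> by blast
  qed
  have "\<bar>\<psi> (f (hd xs)) - \<psi> (f (last xs))\<bar> < \<epsilon>" if c: "glacial_chain M d K' (\<lambda>k. k) xs" for xs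
  proof -
    have ne: "xs \<noteq> []" and sM: "set xs \<subseteq> M" using c unfolding glacial_chain_def by auto
    have "glacial_chain N e K n (map f xs)"
      unfolding glacial_chain_def
    proof (intro conjI allI impI)
      show "map f xs \<noteq> []" using ne by simp
      show "set (map f xs) \<subseteq> N" using sM fM by auto
      fix i assume i: "i + 1 < length (map f xs)"
      then obtain m where m: "xs ! i \<notin> K' m" "xs ! (i+1) \<notin> K' m" "d (xs ! i) (xs ! (i+1)) \<le> real m"
        using c unfolding glacial_chain_def by auto
      have inM: "xs ! i \<in> M" "xs ! (i+1) \<in> M" using sM i by auto
      have "f (xs ! i) \<notin> K (ii m)" "f (xs ! (i+1)) \<notin> K (ii m)" using m inM unfolding K'_def by auto
      moreover have "e (f (xs ! i)) (f (xs ! (i+1))) < R m" using R(2)[OF inM] m(3) by simp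
      then have "e (f (xs ! i)) (f (xs ! (i+1))) \<le> real (n (ii m))" using ii[of m] by linarith
      ultimately show "\<exists>m. map f xs ! i \<notin> K m \<and> map f xs ! (i + 1) \<notin> K m \<and>
          e (map f xs ! i) (map f xs ! (i + 1)) \<le> real (n m)"
        using i by (intro exI[of _ "ii m"]) simp
    qed
    from ch[OF this] show ?thesis using ne by (simp add: hd_map last_map)
  qed
  then show "\<exists>K n. glacial_scale M d K n \<and> (\<forall>xs. glacial_chain M d K n xs \<longrightarrow> \<bar>\<psi> (f (hd xs)) - \<psi> (f (last xs))\<bar> < \<epsilon>)"
    using sc' by blast
qed

lemma vanish_comp:
  assumes X: "Metric_space M d" and Y: "Metric_space N e" and x0: "x0 \<in> M" and y0: "y0 \<in> N"
    and fM: "f \<in> M \<rightarrow> N" and fc: "coarse_map M d N e f" and v: "vanish N e y0 v"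
  shows "vanish M d x0 (\<lambda>x. v (f x))"
  unfolding vanish_def
proof (intro allI impI)
  interpret X: Metric_space M d by fact
  interpret Y: Metric_space N e by fact
  fix \<epsilon>::real assume "\<epsilon> > 0"
  then obtain r where r: "\<And>y. y\<in>N \<Longrightarrow> r < e y0 y \<Longrightarrow> \<bar>v y\<bar> < \<epsilon>" using v unfolding vanish_def by blast
  have "X.mbounded {x\<in>M. f x \<in> Y.mcball y0 r}"
    using fc Y.mcball_subset_mspace Y.mbounded_mcball unfolding coarse_map_def by blast
  then obtain R where R: "{x\<in>M. f x \<in> Y.mcball y0 r} \<subseteq> X.mcball x0 R" using X.mbounded_centered x0 by blast
  show "\<exists>R. \<forall>x\<in>M. R < d x0 x \<longrightarrow> \<bar>v (f x)\<bar> < \<epsilon>"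
  proof (intro exI[of _ R] ballI impI)
    fix x assume x: "x \<in> M" "R < d x0 x"
    then have "x \<notin> X.mcball x0 R" by auto
    then have "f x \<notin> Y.mcball y0 r" using R x(1) by blast
    moreover have "f x \<in> N" using fM x(1) by auto
    ultimately have "r < e y0 (f x)" using y0 by auto
    then show "\<bar>v (f x)\<bar> < \<epsilon>" using r \<open>f x \<in> N\<close> by blast
  qed
qed

definition Tr :: "'a set \<Rightarrow> ('a \<Rightarrow> 'a \<Rightarrow> real) \<Rightarrow> 'b set \<Rightarrow> ('b \<Rightarrow> 'b \<Rightarrow> real) \<Rightarrow> ('a \<Rightarrow> 'b)
   \<Rightarrow> (('a \<Rightarrow> real) \<Rightarrow> real) \<Rightarrow> (('b \<Rightarrow> real) \<Rightarrow> real)" where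
  "Tr M d N e f p = (\<lambda>\<psi>\<in>CF_functions N e. p (approx M d (\<lambda>x. \<psi> (f x))))"

lemma A_facts:
  assumes X: "Metric_space M d" and Y: "Metric_space N e" and x0: "x0 \<in> M"
    and fM: "f \<in> M \<rightarrow> N" and fc: "coarse_map M d N e f" and fl: "large_scale_continuous M d N e f"
    and \<psi>: "\<psi> \<in> CF_functions N e"
  shows "approx M d (\<lambda>x. \<psi> (f x)) \<in> CF_functions M d"
    "vanish M d x0 (\<lambda>x. approx M d (\<lambda>x. \<psi> (f x)) x - \<psi> (f x))"
proof -
  interpret X: Metric_space M d by fact
  have u01: "\<And>x. x\<in>M \<Longrightarrow> 0 \<le> \<psi> (f x) \<and> \<psi> (f x) \<le> 1"
    using CF_fun_01[OF \<psi> _ Y] fM by fastforce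
  have go: "glacially_oscillating M d (\<lambda>x. \<psi> (f x))"
    by (rule pullback_go[OF X Y x0 fM fc fl CF_fun_go[OF \<psi>]])
  show "approx M d (\<lambda>x. \<psi> (f x)) \<in> CF_functions M d" using X.approx_CF[OF u01 x0 go] .
  show "vanish M d x0 (\<lambda>x. approx M d (\<lambda>x. \<psi> (f x)) x - \<psi> (f x))" using X.approx_vanish[OF u01 x0 go] .
qed



lemma Tr_corona:
  assumes X: "Metric_space M d" and Y: "Metric_space N e" and x0: "x0 \<in> M" and y0: "y0 \<in> N"
    and fM: "f \<in> M \<rightarrow> N" and fc: "coarse_map M d N e f" and fl: "large_scale_continuous M d N e f"
    and pt: "p \<in> topspace (CF_cube M d)" and pe: "Metric_space.esc M d x0 p"
  shows "Tr M d N e f p \<in> topspace (CF_cube N e)" "Metric_space.esc N e y0 (Tr M d N e f p)"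
proof -
  interpret X: Metric_space M d by fact
  interpret Y: Metric_space N e by fact
  let ?A = "\<lambda>\<psi>. approx M d (\<lambda>x. \<psi> (f x))"
  have AF: "\<And>\<psi>. \<psi> \<in> CF_functions N e \<Longrightarrow> ?A \<psi> \<in> CF_functions M d"
    using A_facts(1)[OF X Y x0 fM fc fl] by blast
  have pv: "\<And>\<phi>. \<phi> \<in> CF_functions M d \<Longrightarrow> p \<phi> \<in> {0..1}" using pt by (auto simp: CF_cube_eq PiE_iff)
  show "Tr M d N e f p \<in> topspace (CF_cube N e)"
    using AF pv by (auto simp: CF_cube_eq PiE_iff Tr_def)
  show "Y.esc y0 (Tr M d N e f p)"
    unfolding Y.esc_def
  proof (intro allI impI)
    fix r J and \<epsilon>::real assume a: "finite J \<and> J \<subseteq> CF_functions N e \<and> \<epsilon> > 0"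
    have "\<forall>\<psi>\<in>J. \<exists>rr. \<forall>x\<in>M. rr < d x0 x \<longrightarrow> \<bar>?A \<psi> x - \<psi> (f x)\<bar> < \<epsilon>/2"
    proof
      fix \<psi> assume "\<psi> \<in> J"
      then have "vanish M d x0 (\<lambda>x. ?A \<psi> x - \<psi> (f x))" using A_facts(2)[OF X Y x0 fM fc fl] a by blast
      then show "\<exists>rr. \<forall>x\<in>M. rr < d x0 x \<longrightarrow> \<bar>?A \<psi> x - \<psi> (f x)\<bar> < \<epsilon>/2"
        unfolding vanish_def using a by (meson half_gt_zero)
    qed
    then obtain rr where rr: "\<And>\<psi> x. \<psi>\<in>J \<Longrightarrow> x\<in>M \<Longrightarrow> rr \<psi> < d x0 x \<Longrightarrow> \<bar>?A \<psi> x - \<psi> (f x)\<bar> < \<epsilon>/2"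
      by metis
    define R1 where "R1 = Max (insert 0 (rr ` J))"
    have R1: "\<And>\<psi>. \<psi> \<in> J \<Longrightarrow> rr \<psi> \<le> R1" unfolding R1_def using a by (intro Max_ge) auto
    have "X.mbounded {x\<in>M. f x \<in> Y.mcball y0 r}"
      using fc Y.mcball_subset_mspace Y.mbounded_mcball unfolding coarse_map_def by blast
    then obtain R2 where R2: "{x\<in>M. f x \<in> Y.mcball y0 r} \<subseteq> X.mcball x0 R2" using X.mbounded_centered x0 by blast
    have fin: "finite (?A ` J) \<and> ?A ` J \<subseteq> CF_functions M d \<and> \<epsilon>/2 > 0" using a AF by auto
    have "\<exists>x\<in>M. max R1 R2 < d x0 x \<and> (\<forall>\<phi>\<in>?A ` J. \<bar>\<phi> x - p \<phi>\<bar> < \<epsilon>/2)"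
      using pe fin unfolding X.esc_def by blast
    then obtain x where x: "x \<in> M" "max R1 R2 < d x0 x" and xa: "\<And>\<psi>. \<psi> \<in> J \<Longrightarrow> \<bar>?A \<psi> x - p (?A \<psi>)\<bar> < \<epsilon>/2"
      by blast
    have fx: "f x \<in> N" using fM x(1) by auto
    have "x \<notin> X.mcball x0 R2" using x by auto
    then have "f x \<notin> Y.mcball y0 r" using R2 x(1) by blast
    then have far: "r < e y0 (f x)" using y0 fx by auto
    have "\<forall>\<psi>\<in>J. \<bar>\<psi> (f x) - Tr M d N e f p \<psi>\<bar> < \<epsilon>"
    proof
      fix \<psi> assume \<psi>: "\<psi> \<in> J"
      have "rr \<psi> < d x0 x" using R1[OF \<psi>] x(2) by linarith
      then have h1: "\<bar>?A \<psi> x - \<psi> (f x)\<bar> < \<epsilon>/2" using rr[OF \<psi> x(1)] by blast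
      have h2: "\<bar>?A \<psi> x - p (?A \<psi>)\<bar> < \<epsilon>/2" using xa[OF \<psi>] .
      have "Tr M d N e f p \<psi> = p (?A \<psi>)" using \<psi> a by (auto simp: Tr_def)
      then show "\<bar>\<psi> (f x) - Tr M d N e f p \<psi>\<bar> < \<epsilon>" using h1 h2 unfolding abs_less_iff by linarith
    qed
    then show "\<exists>y\<in>N. r < e y0 y \<and> (\<forall>\<psi>\<in>J. \<bar>\<psi> y - Tr M d N e f p \<psi>\<bar> < \<epsilon>)"
      using fx far by blast
  qed
qed

lemma Tr_cont:
  assumes X: "Metric_space M d" and Y: "Metric_space N e" and x0: "x0 \<in> M"
    and fM: "f \<in> M \<rightarrow> N" and fc: "coarse_map M d N e f" and fl: "large_scale_continuous M d N e f"
  shows "continuous_map (CF_cube M d) (CF_cube N e) (Tr M d N e f)"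
  unfolding CF_cube_eq continuous_map_componentwise
proof (intro conjI ballI)
  show "Tr M d N e f ` topspace (cubeT (CF_functions M d)) \<subseteq> extensional (CF_functions N e)"
    by (auto simp: Tr_def)
  fix \<psi> assume \<psi>: "\<psi> \<in> CF_functions N e"
  have AF: "approx M d (\<lambda>x. \<psi> (f x)) \<in> CF_functions M d" using A_facts(1)[OF X Y x0 fM fc fl \<psi>] .
  show "continuous_map (cubeT (CF_functions M d)) (top_of_set {0..1}) (\<lambda>p. Tr M d N e f p \<psi>)"
    by (rule continuous_map_eq[OF continuous_map_product_projection[OF AF]]) (use \<psi> in \<open>simp add: Tr_def\<close>)
qed

lemma Tr_inv:
  assumes X: "Metric_space M d" and Y: "Metric_space N e" and x0: "x0 \<in> M" and y0: "y0 \<in> N"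
    and fM: "f \<in> M \<rightarrow> N" and fc: "coarse_map M d N e f" and fl: "large_scale_continuous M d N e f"
    and gN: "g \<in> N \<rightarrow> M" and gc: "coarse_map N e M d g" and gl: "large_scale_continuous N e M d g"
    and cl: "close_maps M d (g \<circ> f) id"
    and pt: "p \<in> topspace (CF_cube M d)" and pe: "Metric_space.esc M d x0 p"
  shows "Tr N e M d g (Tr M d N e f p) = p"
proof
  interpret X: Metric_space M d by fact
  interpret Y: Metric_space N e by fact
  fix \<phi>
  show "Tr N e M d g (Tr M d N e f p) \<phi> = p \<phi>"
  proof (cases "\<phi> \<in> CF_functions M d")
    case False
    then show ?thesis using pt by (auto simp: Tr_def CF_cube_eq PiE_iff extensional_def)
  next
    case True
    define w where "w = approx N e (\<lambda>y. \<phi> (g y))"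
    have wF: "w \<in> CF_functions N e" unfolding w_def by (rule A_facts(1)[OF Y X y0 gN gc gl True])
    have wv: "vanish N e y0 (\<lambda>y. w y - \<phi> (g y))" unfolding w_def by (rule A_facts(2)[OF Y X y0 gN gc gl True])
    define a where "a = approx M d (\<lambda>x. w (f x))"
    have aF: "a \<in> CF_functions M d" unfolding a_def by (rule A_facts(1)[OF X Y x0 fM fc fl wF])
    have av: "vanish M d x0 (\<lambda>x. a x - w (f x))" unfolding a_def by (rule A_facts(2)[OF X Y x0 fM fc fl wF])
    have eq: "Tr N e M d g (Tr M d N e f p) \<phi> = p a"
      using True wF unfolding Tr_def a_def w_def by simp
    have v2: "vanish M d x0 (\<lambda>x. w (f x) - \<phi> (g (f x)))"
      using vanish_comp[OF X Y x0 y0 fM fc wv] by simp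
    obtain C where C: "\<And>x. x \<in> M \<Longrightarrow> d (g (f x)) x \<le> C" using cl unfolding close_maps_def by auto
    have v3: "vanish M d x0 (\<lambda>x. \<phi> (g (f x)) - \<phi> x)"
      by (rule X.close_vanish[OF x0 CF_fun_go[OF True], of "\<lambda>x. g (f x)" C]) (use fM gN C in auto)
    have "vanish M d x0 (\<lambda>x. a x - \<phi> x)"
      by (rule vanish_trans[OF av vanish_trans[OF v2 v3]])
    then have "p a = p \<phi>" by (rule X.esc_respect[OF pe aF True])
    then show ?thesis using eq by simp
  qed
qed



lemma corona_cont:
  assumes "continuous_map (CF_cube M d) (CF_cube N e) T"
    and "\<And>p. p \<in> topspace (CF_corona M d) \<Longrightarrow> T p \<in> topspace (CF_corona N e)"
  shows "continuous_map (CF_corona M d) (CF_corona N e) T"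
proof -
  have "continuous_map (CF_corona M d) (CF_cube N e) T"
    unfolding CF_corona_def by (rule continuous_map_from_subtopology[OF assms(1)])
  moreover have "T \<in> topspace (CF_corona M d) \<rightarrow> (CF_compactification N e - CF_eval N e ` N)"
    using assms(2) unfolding CF_corona_def by auto
  ultimately show ?thesis unfolding CF_corona_def[of N e] continuous_map_in_subtopology
    by (simp add: CF_corona_def)
qed

theorem proposition4p6:
  fixes M :: "'a set" and d :: "'a \<Rightarrow> 'a \<Rightarrow> real"
    and N :: "'b set" and e :: "'b \<Rightarrow> 'b \<Rightarrow> real"
  assumes "proper_metric_space M d" and "proper_metric_space N e"
    and "coarsely_equivalent M d N e"
  shows "CF_corona M d homeomorphic_space CF_corona N e"
proof -
  have X: "Metric_space M d" and Y: "Metric_space N e" using assms(1,2) unfolding proper_metric_space_def by auto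
  interpret X: Metric_space M d by fact
  interpret Y: Metric_space N e by fact
  obtain f g where fM: "f \<in> M \<rightarrow> N" and gN: "g \<in> N \<rightarrow> M" and fc: "coarse_map M d N e f"
    and fl: "large_scale_continuous M d N e f" and gc: "coarse_map N e M d g"
    and gl: "large_scale_continuous N e M d g" and cf: "close_maps M d (g \<circ> f) id"
    and cg: "close_maps N e (f \<circ> g) id"
    using assms(3) unfolding coarsely_equivalent_def by blast
  show ?thesis
  proof (cases "M = {}")
    case True
    then have "N = {}" using gN by auto
    have e1: "topspace (CF_corona M d) = {}" using True
      by (simp add: CF_corona_def CF_compactification_def)
    have e2: "topspace (CF_corona N e) = {}" using \<open>N = {}\<close>
      by (simp add: CF_corona_def CF_compactification_def)
    show ?thesis using e1 e2 by (simp add: homeomorphic_empty_space_eq null_topspace_iff_trivial)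
  next
    case False
    then obtain x0 where x0: "x0 \<in> M" by auto
    define y0 where "y0 = f x0"
    have y0: "y0 \<in> N" using fM x0 unfolding y0_def by auto
    have cX: "\<And>p. p \<in> topspace (CF_corona M d) \<longleftrightarrow> p \<in> topspace (CF_cube M d) \<and> X.esc x0 p"
      using X.corona_iff[OF assms(1) x0] by blast
    have cY: "\<And>p. p \<in> topspace (CF_corona N e) \<longleftrightarrow> p \<in> topspace (CF_cube N e) \<and> Y.esc y0 p"
      using Y.corona_iff[OF assms(2) y0] by blast
    have "homeomorphic_maps (CF_corona M d) (CF_corona N e) (Tr M d N e f) (Tr N e M d g)"
      unfolding homeomorphic_maps_def
    proof (intro conjI ballI)
      show "continuous_map (CF_corona M d) (CF_corona N e) (Tr M d N e f)"
        by (rule corona_cont[OF Tr_cont[OF X Y x0 fM fc fl]])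
           (use cX cY Tr_corona[OF X Y x0 y0 fM fc fl] in blast)
      show "continuous_map (CF_corona N e) (CF_corona M d) (Tr N e M d g)"
        by (rule corona_cont[OF Tr_cont[OF Y X y0 gN gc gl]])
           (use cX cY Tr_corona[OF Y X y0 x0 gN gc gl] in blast)
      fix p assume "p \<in> topspace (CF_corona M d)"
      then show "Tr N e M d g (Tr M d N e f p) = p"
        using cX Tr_inv[OF X Y x0 y0 fM fc fl gN gc gl cf] by blast
    next
      fix p assume "p \<in> topspace (CF_corona N e)"
      then show "Tr M d N e f (Tr N e M d g p) = p"
        using cY Tr_inv[OF Y X y0 x0 gN gc gl fM fc fl cg] by blast
    qed
    then show ?thesis by (rule homeomorphic_maps_imp_homeomorphic_space)
  qed
qed


end
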